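(* For every set $A$ of positive integers with $1\in A$ and every $n\ge 0$, $\mathrm{Total}(n,A)=G(n,A)$; that is, the maximum total value of a reachable position in the $n$-cell abstract generalized 2048 game with tile values $A$ equals the smallest nonnegative integer for which the greedy change-making algorithm with coin values $A$ uses $n$ or more coins (both sides being $\infty$ simultaneously when no such integer exists).
   Context: For an integer $n\ge 0$, the abstract generalized 2048 game $\mathrm{AGG}(n,A)$ is played on $n$ indistinguishable cells. A position assigns to each cell either nothing (the cell is empty) or a tile carrying a value in $A$. The initial position has all cells empty. A step, which can be performed from any position having at least one empty cell, consists of: (i) placing a new tile of value $1$ into a chosen empty cell; then (ii) optionally choosing any collection of pairwise disjoint sets of nonempty cells such that the sum of the tile values in each chosen set belongs to $A$, and merging each chosen set into a single tile, whose value is that sum, placed in one cell of the set, the other cells of the set becoming empty. The game ends when, after a step, all cells are nonempty (no further step is then possible). A position is reachable if it can be obtained from the initial position by a finite sequence of steps; its total value is the sum of its tile values. $\mathrm{Total}(n,A)$ is the supremum (possibly $\infty$) of the total values of reachable positions of $\mathrm{AGG}(n,A)$ ($\mathrm{Total}(0,A)=0$). The greedy change-making algorithm with coin values $A$, applied to a nonnegative integer $s$, uses no coins if $s=0$, and otherwise selects the largest $c\in A$ with $c\le s$ and then recursively makes change for $s-c$; the number of coins used is the number of selections. $G(n,A)$ is the smallest nonnegative integer $s$ for which this algorithm uses at least $n$ coins ($\infty$ if none exists). *)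

theory Defs
  imports Main "HOL-Library.Multiset" "HOL-Library.Extended_Nat"
begin

text \<open>A position of AGG(n,A) is represented by the multiset of the values of its
  tiles (cells are indistinguishable); the number of empty cells is n - size M.\<close>

definition agg_step :: "nat \<Rightarrow> nat set \<Rightarrow> nat multiset \<Rightarrow> nat multiset \<Rightarrow> bool" where
  "agg_step n A M M' \<longleftrightarrow> size M < n \<and>
     (\<exists>Gs :: nat multiset list.
        (\<forall>g \<in> set Gs. g \<noteq> {#} \<and> sum_mset g \<in> A) \<and>
        sum_list Gs \<subseteq># M + {#1#} \<and>
        M' = (M + {#1#}) - sum_list Gs + mset (map sum_mset Gs))"

inductive agg_reachable :: "nat \<Rightarrow> nat set \<Rightarrow> nat multiset \<Rightarrow> bool" for n A where
  init: "agg_reachable n A {#}"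
| step: "agg_reachable n A M \<Longrightarrow> agg_step n A M M' \<Longrightarrow> agg_reachable n A M'"

definition agg_total :: "nat \<Rightarrow> nat set \<Rightarrow> enat" where
  "agg_total n A = Sup {enat (sum_mset M) | M. agg_reachable n A M}"

text \<open>Number of coins used by the greedy change-making algorithm with coin set A on s.
  (The guard on the empty set only matters when 1 \<notin> A, to make the function total.)\<close>
function greedy_coins :: "nat set \<Rightarrow> nat \<Rightarrow> nat" where
  "greedy_coins A s =
     (if s = 0 \<or> {c \<in> A. 0 < c \<and> c \<le> s} = {} then 0
      else Suc (greedy_coins A (s - Max {c \<in> A. 0 < c \<and> c \<le> s})))"
  by auto
termination
proof (relation "measure snd")
  fix A :: "nat set" and s :: nat
  assume h: "\<not> (s = 0 \<or> {c \<in> A. 0 < c \<and> c \<le> s} = {})"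
  have fin: "finite {c \<in> A. 0 < c \<and> c \<le> s}" by (rule finite_subset[of _ "{..s}"]) auto
  have "Max {c \<in> A. 0 < c \<and> c \<le> s} \<in> {c \<in> A. 0 < c \<and> c \<le> s}"
    using h fin Max_in by blast
  then show "((A, s - Max {c \<in> A. 0 < c \<and> c \<le> s}), A, s) \<in> measure snd"
    using h by auto
qed auto

definition greedy_G :: "nat \<Rightarrow> nat set \<Rightarrow> enat" where
  "greedy_G n A = (if \<exists>s. n \<le> greedy_coins A s
                   then enat (LEAST s. n \<le> greedy_coins A s) else \<infinity>)"

end

theory Submission
  imports Defs
begin

declare greedy_coins.simps[simp del]

lemma g0: "greedy_coins A 0 = 0"
  by (subst greedy_coins.simps) simp

lemma coin_max:
  assumes "1 \<in> A" "0 < (s::nat)"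
  defines "c \<equiv> Max {c \<in> A. 0 < c \<and> c \<le> s}"
  shows "c \<in> A" "0 < c" "c \<le> s" "\<And>a. a \<in> A \<Longrightarrow> 0 < a \<Longrightarrow> a \<le> s \<Longrightarrow> a \<le> c"
proof -
  have fin: "finite {c \<in> A. 0 < c \<and> c \<le> s}" by (rule finite_subset[of _ "{..s}"]) auto
  have ne: "{c \<in> A. 0 < c \<and> c \<le> s} \<noteq> {}" using assms by auto
  have "c \<in> {c \<in> A. 0 < c \<and> c \<le> s}" unfolding c_def using fin ne Max_in by blast
  then show "c \<in> A" "0 < c" "c \<le> s" by auto
  show "\<And>a. a \<in> A \<Longrightarrow> 0 < a \<Longrightarrow> a \<le> s \<Longrightarrow> a \<le> c"
    unfolding c_def using fin by (intro Max_ge) auto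
qed

lemma g_rec:
  assumes "1 \<in> A" "0 < s"
  shows "greedy_coins A s = Suc (greedy_coins A (s - Max {c \<in> A. 0 < c \<and> c \<le> s}))"
  apply (subst greedy_coins.simps)
  using assms by auto

definition need :: "nat set \<Rightarrow> nat \<Rightarrow> nat" where
  "need A s = Max (insert 0 ((\<lambda>u. Suc (greedy_coins A u)) ` {..<s}))"

lemma need_le_iff: "need A s \<le> k \<longleftrightarrow> (\<forall>u<s. Suc (greedy_coins A u) \<le> k)"
  unfolding need_def by auto

lemma le_need: "u < s \<Longrightarrow> Suc (greedy_coins A u) \<le> need A s"
  using need_le_iff[of A s "need A s"] by auto

lemma need_add:
  assumes "1 \<in> A" "a \<in> A" "0 < a"
  shows "need A (a + b) \<le> max (need A a) (Suc (need A b))"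
  unfolding need_le_iff
proof (intro allI impI)
  fix u assume u: "u < a + b"
  show "Suc (greedy_coins A u) \<le> max (need A a) (Suc (need A b))"
  proof (cases "u < a")
    case True then show ?thesis using le_need[of u a A] by auto
  next
    case False
    then have up: "0 < u" using assms by auto
    define c where "c = Max {c \<in> A. 0 < c \<and> c \<le> u}"
    have "a \<le> c" using coin_max(4)[OF assms(1) up, of a] assms False unfolding c_def by auto
    moreover have "c \<le> u" using coin_max(3)[OF assms(1) up] unfolding c_def by auto
    ultimately have "u - c < b" using u by auto
    then have "Suc (greedy_coins A (u - c)) \<le> need A b" by (rule le_need)
    moreover have "greedy_coins A u = Suc (greedy_coins A (u - c))"
      using g_rec[OF assms(1) up] unfolding c_def by simp
    ultimately show ?thesis by simp
  qed
qed

fun phi :: "nat set \<Rightarrow> nat list \<Rightarrow> nat" where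
  "phi A [] = 0"
| "phi A (x # xs) = max (need A x) (Suc (phi A xs))"

lemma need_sum:
  assumes "1 \<in> A" "0 \<notin> A" "set xs \<subseteq> A"
  shows "need A (sum_list xs) \<le> phi A xs"
  using assms(3)
proof (induction xs)
  case Nil then show ?case by (simp add: need_def)
next
  case (Cons x xs)
  then have "x \<in> A" "0 < x" using assms by (auto intro: gr0I)
  then have "need A (x + sum_list xs) \<le> max (need A x) (Suc (need A (sum_list xs)))"
    using need_add assms by blast
  then show ?case using Cons by auto
qed

lemma phi_snoc:
  assumes "1 \<le> need A y"
  shows "phi A (xs @ [y]) \<le> max (phi A xs) (length xs + need A y)"
  using assms by (induction xs) auto

lemma sub_exists:
  "h \<subseteq># mset xs \<Longrightarrow> \<exists>zs. mset zs = h \<and> phi A zs \<le> phi A xs"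
proof (induction xs arbitrary: h)
  case Nil then show ?case by (intro exI[of _ "[]"]) auto
next
  case (Cons x xs)
  show ?case
  proof (cases "x \<in># h")
    case True
    have "h - {#x#} \<subseteq># mset xs" using Cons.prems
      by (metis mset.simps(2) subset_eq_diff_conv add_mset_add_single)
    then obtain zs where zs: "mset zs = h - {#x#}" "phi A zs \<le> phi A xs" using Cons.IH by blast
    show ?thesis
      apply (intro exI[of _ "x # zs"])
      using zs True by auto
  next
    case False
    then have "h \<subseteq># mset xs" using Cons.prems
      by (metis mset.simps(2) subset_mset.le_add_same_cancel2 diff_single_trivial subset_eq_diff_conv add_mset_add_single)
    then obtain zs where zs: "mset zs = h" "phi A zs \<le> phi A xs" using Cons.IH by blast
    then show ?thesis by (intro exI[of _ zs]) auto
  qed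
qed

lemma merge_one:
  assumes "1 \<in> A" "0 \<notin> A"
  shows "set xs \<subseteq> A \<Longrightarrow> g \<subseteq># mset xs \<Longrightarrow> g \<noteq> {#} \<Longrightarrow>
    \<exists>ys. mset ys = mset xs - g + {#sum_mset g#} \<and> phi A ys \<le> phi A xs"
proof (induction xs arbitrary: g)
  case Nil then show ?case by auto
next
  case (Cons x xs)
  show ?case
  proof (cases "x \<in># g")
    case True
    have h1: "g - {#x#} \<subseteq># mset xs" using Cons.prems
      by (metis mset.simps(2) subset_eq_diff_conv add_mset_add_single)
    then obtain zs where zs: "mset zs = g - {#x#}" "phi A zs \<le> phi A xs"
      using sub_exists by blast
    have h2: "mset xs - (g - {#x#}) \<subseteq># mset xs" by simp
    then obtain rs where rs: "mset rs = mset xs - (g - {#x#})" "phi A rs \<le> phi A xs"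
      using sub_exists by blast
    have mg: "mset (x # zs) = g" using zs True by simp
    have "set zs \<subseteq> set xs"
      by (metis h1 mset_subset_eqD set_mset_mset subsetI zs(1))
    then have sA: "set (x # zs) \<subseteq> A" using Cons.prems by auto
    have "sum_mset g = sum_list (x # zs)" using mg by (metis sum_mset_sum_list)
    then have "need A (sum_mset g) \<le> phi A (x # zs)" using need_sum[OF assms sA] by simp
    also have "\<dots> \<le> phi A (x # xs)" using zs by auto
    finally have n1: "need A (sum_mset g) \<le> phi A (x # xs)" .
    have "mset (sum_mset g # rs) = mset (x # xs) - g + {#sum_mset g#}"
    proof -
      obtain g' where g': "g = add_mset x g'" using True by (metis multi_member_split)
      show ?thesis using rs g' by simp
    qed
    moreover have "phi A (sum_mset g # rs) \<le> phi A (x # xs)" using n1 rs by auto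
    ultimately show ?thesis by blast
  next
    case False
    then have h: "g \<subseteq># mset xs" using Cons.prems
      by (metis mset.simps(2) diff_single_trivial subset_eq_diff_conv add_mset_add_single)
    then obtain ys where ys: "mset ys = mset xs - g + {#sum_mset g#}" "phi A ys \<le> phi A xs"
      using Cons by auto
    have "mset (x # ys) = mset (x # xs) - g + {#sum_mset g#}"
      using ys False h by (simp add: subset_mset.diff_add_assoc2)
    moreover have "phi A (x # ys) \<le> phi A (x # xs)" using ys by auto
    ultimately show ?thesis by blast
  qed
qed

lemma merge_many:
  assumes "1 \<in> A" "0 \<notin> A"
  shows "set xs \<subseteq> A \<Longrightarrow> (\<forall>g \<in> set Gs. g \<noteq> {#} \<and> sum_mset g \<in> A) \<Longrightarrow>
    sum_list Gs \<subseteq># mset xs \<Longrightarrow>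
    \<exists>ys. mset ys = mset xs - sum_list Gs + mset (map sum_mset Gs) \<and> phi A ys \<le> phi A xs
       \<and> set ys \<subseteq> A"
proof (induction Gs arbitrary: xs)
  case Nil then show ?case by auto
next
  case (Cons g Gs)
  have gs: "g \<subseteq># mset xs" using Cons.prems(3)
    by (metis sum_list.Cons subset_mset.order_trans mset_subset_eq_add_left)
  obtain ys1 where ys1: "mset ys1 = mset xs - g + {#sum_mset g#}" "phi A ys1 \<le> phi A xs"
    using merge_one[OF assms Cons.prems(1) gs] Cons.prems(2) by auto
  have sy: "set ys1 \<subseteq> A"
  proof
    fix y assume "y \<in> set ys1"
    then have "y \<in># mset xs - g + {#sum_mset g#}" using ys1 by (metis set_mset_mset)
    then have "y \<in># mset xs \<or> y = sum_mset g" by (auto dest: in_diffD)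
    then show "y \<in> A" using Cons.prems by auto
  qed
  obtain R where R: "mset xs = g + sum_list Gs + R" using Cons.prems(3)
      by (auto simp: subset_mset.le_iff_add)
  have "mset ys1 = sum_list Gs + (R + {#sum_mset g#})" using ys1(1) R by (simp add: add.assoc)
  then have sub: "sum_list Gs \<subseteq># mset ys1" by simp
  have ga: "\<forall>g \<in> set Gs. g \<noteq> {#} \<and> sum_mset g \<in> A" using Cons.prems(2) by simp
  obtain ys where ys: "mset ys = mset ys1 - sum_list Gs + mset (map sum_mset Gs)"
     "phi A ys \<le> phi A ys1" "set ys \<subseteq> A"
    using Cons.IH[OF sy ga sub] by blast
  have "mset ys = mset xs - sum_list (g # Gs) + mset (map sum_mset (g # Gs))"
    using ys(1) ys1(1) R by (simp add: add.assoc)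
  then show ?case using ys ys1 by auto
qed

lemma need_one: "need A (Suc 0) = 1"
proof -
  have "need A (Suc 0) \<le> 1" by (simp add: need_le_iff g0)
  moreover have "Suc (greedy_coins A 0) \<le> need A (Suc 0)" by (rule le_need) simp
  ultimately show ?thesis by simp
qed

lemma invariant:
  assumes "1 \<in> A" "0 \<notin> A"
  shows "agg_reachable n A M \<Longrightarrow> \<exists>xs. mset xs = M \<and> set xs \<subseteq> A \<and> phi A xs \<le> n"
proof (induction rule: agg_reachable.induct)
  case init then show ?case by (intro exI[of _ "[]"]) auto
next
  case (step M M')
  obtain xs where xs: "mset xs = M" "set xs \<subseteq> A" "phi A xs \<le> n" using step.IH by blast
  obtain Gs where Gs: "\<forall>g \<in> set Gs. g \<noteq> {#} \<and> sum_mset g \<in> A" "sum_list Gs \<subseteq># M + {#1#}"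
    "M' = (M + {#1#}) - sum_list Gs + mset (map sum_mset Gs)" "size M < n"
    using step.hyps(2) unfolding agg_step_def by blast
  let ?xs = "xs @ [1]"
  have "phi A ?xs \<le> max (phi A xs) (length xs + need A 1)"
    by (rule phi_snoc) (use need_one[of A] in simp)
  then have p: "phi A ?xs \<le> n" using xs Gs(4) by (auto simp: need_one)
  have m: "mset ?xs = M + {#1#}" using xs by simp
  have s: "set ?xs \<subseteq> A" using xs assms by auto
  obtain ys where "mset ys = mset ?xs - sum_list Gs + mset (map sum_mset Gs)"
     "phi A ys \<le> phi A ?xs" "set ys \<subseteq> A"
    using merge_many[OF assms s Gs(1)] Gs(2) m by auto
  then show ?case using Gs(3) m p by (intro exI[of _ ys]) auto
qed

lemma reach_bound:
  assumes "1 \<in> A" "0 \<notin> A" "agg_reachable n A M" "u < sum_mset M"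
  shows "Suc (greedy_coins A u) \<le> n"
proof -
  obtain xs where xs: "mset xs = M" "set xs \<subseteq> A" "phi A xs \<le> n"
    using invariant[OF assms(1,2,3)] by blast
  have "need A (sum_list xs) \<le> n" using need_sum[OF assms(1,2) xs(2)] xs(3) by simp
  moreover have "sum_list xs = sum_mset M" using xs(1) by (metis sum_mset_sum_list)
  ultimately show ?thesis using assms(4) by (simp add: need_le_iff)
qed

function gl :: "nat set \<Rightarrow> nat \<Rightarrow> nat list" where
  "gl A s =
     (if s = 0 \<or> {c \<in> A. 0 < c \<and> c \<le> s} = {} then []
      else Max {c \<in> A. 0 < c \<and> c \<le> s} # gl A (s - Max {c \<in> A. 0 < c \<and> c \<le> s}))"
  by auto
termination
proof (relation "measure snd")
  fix A :: "nat set" and s :: nat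
  assume h: "\<not> (s = 0 \<or> {c \<in> A. 0 < c \<and> c \<le> s} = {})"
  have fin: "finite {c \<in> A. 0 < c \<and> c \<le> s}" by (rule finite_subset[of _ "{..s}"]) auto
  have "Max {c \<in> A. 0 < c \<and> c \<le> s} \<in> {c \<in> A. 0 < c \<and> c \<le> s}"
    using h fin Max_in by blast
  then show "((A, s - Max {c \<in> A. 0 < c \<and> c \<le> s}), A, s) \<in> measure snd"
    using h by auto
qed auto

declare gl.simps[simp del]

lemma gl0: "gl A 0 = []"
  by (subst gl.simps) simp

lemma gl_props:
  assumes "1 \<in> A"
  shows "length (gl A s) = greedy_coins A s \<and> sum_list (gl A s) = s \<and> set (gl A s) \<subseteq> A"
proof (induction s rule: less_induct)
  case (less s)
  show ?case
  proof (cases "s = 0")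
    case True then show ?thesis by (simp add: gl0 g0)
  next
    case False
    then have sp: "0 < s" by simp
    define c where "c = Max {c \<in> A. 0 < c \<and> c \<le> s}"
    have c: "c \<in> A" "0 < c" "c \<le> s" using coin_max[OF assms sp] unfolding c_def by auto
    have ne: "{c \<in> A. 0 < c \<and> c \<le> s} \<noteq> {}" using assms sp by auto
    have e1: "gl A s = c # gl A (s - c)"
      by (subst gl.simps) (use sp ne in \<open>simp add: c_def\<close>)
    have e2: "greedy_coins A s = Suc (greedy_coins A (s - c))"
      using g_rec[OF assms sp] unfolding c_def by simp
    have "s - c < s" using c sp by simp
    then show ?thesis using less.IH[of "s - c"] e1 e2 c by auto
  qed
qed

lemma gl_step:
  assumes "1 \<in> A"
  shows "\<exists>pre tl. gl A s = pre @ tl \<and> gl A (Suc s) = pre @ [Suc (sum_list tl)] \<and> Suc (sum_list tl) \<in> A"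
proof (induction s rule: less_induct)
  case (less s)
  show ?case
  proof (cases "Suc s \<in> A")
    case True
    have fin: "finite {c \<in> A. 0 < c \<and> c \<le> Suc s}" by (rule finite_subset[of _ "{..Suc s}"]) auto
    have m: "Max {c \<in> A. 0 < c \<and> c \<le> Suc s} = Suc s"
      using True fin by (intro Max_eqI) auto
    have "gl A (Suc s) = [Suc s]"
      by (subst gl.simps) (use True m in \<open>auto simp: gl0\<close>)
    then show ?thesis using True gl_props[OF assms, of s]
      by (intro exI[of _ "[]"] exI[of _ "gl A s"]) auto
  next
    case False
    then have sp: "0 < s" using assms by (cases s) auto
    have eqset: "{c \<in> A. 0 < c \<and> c \<le> Suc s} = {c \<in> A. 0 < c \<and> c \<le> s}"
      using False by (auto simp: le_Suc_eq)
    define c where "c = Max {c \<in> A. 0 < c \<and> c \<le> s}"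
    have c: "c \<in> A" "0 < c" "c \<le> s" using coin_max[OF assms sp] unfolding c_def by auto
    have ne: "{c \<in> A. 0 < c \<and> c \<le> s} \<noteq> {}" using assms sp by auto
    have e1: "gl A s = c # gl A (s - c)"
      by (subst gl.simps) (use sp ne in \<open>simp add: c_def\<close>)
    have e2: "gl A (Suc s) = c # gl A (Suc (s - c))"
      by (subst gl.simps) (use sp ne eqset c in \<open>simp add: c_def Suc_diff_le\<close>)
    have "s - c < s" using c sp by simp
    then obtain pre tl where "gl A (s - c) = pre @ tl" "gl A (Suc (s - c)) = pre @ [Suc (sum_list tl)]"
      "Suc (sum_list tl) \<in> A" using less.IH by blast
    then show ?thesis using e1 e2 by (intro exI[of _ "c # pre"] exI[of _ tl]) auto
  qed
qed

lemma gl_reach: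
  assumes "1 \<in> A"
  shows "(\<forall>u<s. greedy_coins A u < n) \<Longrightarrow> agg_reachable n A (mset (gl A s))"
proof (induction s)
  case 0 then show ?case by (simp add: gl0 agg_reachable.init)
next
  case (Suc s)
  then have r: "agg_reachable n A (mset (gl A s))" by simp
  obtain pre tl where p: "gl A s = pre @ tl" "gl A (Suc s) = pre @ [Suc (sum_list tl)]"
    "Suc (sum_list tl) \<in> A" using gl_step[OF assms] by blast
  have sz: "size (mset (gl A s)) < n" using Suc.prems gl_props[OF assms, of s] by simp
  have "agg_step n A (mset (gl A s)) (mset (gl A (Suc s)))"
    unfolding agg_step_def
  proof (intro conjI exI[of _ "[mset tl + {#1#}]"])
    show "size (mset (gl A s)) < n" by (rule sz)
    show "\<forall>g\<in>set [mset tl + {#1#}]. g \<noteq> {#} \<and> sum_mset g \<in> A"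
      using p(3) by (simp add: sum_mset_sum_list)
    show "sum_list [mset tl + {#1#}] \<subseteq># mset (gl A s) + {#1#}" using p(1) by simp
    show "mset (gl A (Suc s)) = mset (gl A s) + {#1#} - sum_list [mset tl + {#1#}] +
        mset (map sum_mset [mset tl + {#1#}])"
      using p(1,2) by (simp add: sum_mset_sum_list)
  qed
  then show ?case using r agg_reachable.step by blast
qed

theorem mainTheorem10:
  fixes A :: "nat set" and n :: nat
  assumes "1 \<in> A" and "0 \<notin> A"
  shows "agg_total n A = greedy_G n A"
proof -
  let ?S = "{enat (sum_mset M) | M. agg_reachable n A M}"
  have low: "enat s \<in> ?S" if "\<forall>u<s. greedy_coins A u < n" for s
  proof -
    have "agg_reachable n A (mset (gl A s))" using gl_reach[OF assms(1) that] .
    moreover have "sum_mset (mset (gl A s)) = s"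
      using gl_props[OF assms(1), of s] by (simp add: sum_mset_sum_list)
    ultimately show ?thesis by (metis (mono_tags, lifting) mem_Collect_eq)
  qed
  show ?thesis
  proof (cases "\<exists>s. n \<le> greedy_coins A s")
    case True
    define N where "N = (LEAST s. n \<le> greedy_coins A s)"
    have G: "greedy_G n A = enat N" using True unfolding greedy_G_def N_def by simp
    have hN: "n \<le> greedy_coins A N" unfolding N_def using True by (metis LeastI)
    have bel: "\<forall>u<N. greedy_coins A u < n" unfolding N_def
      using not_less_Least by (metis not_le)
    have "Sup ?S = enat N"
    proof (rule antisym)
      show "Sup ?S \<le> enat N"
      proof (rule Sup_least)
        fix x assume "x \<in> ?S"
        then obtain M where M: "x = enat (sum_mset M)" "agg_reachable n A M" by blast
        have "sum_mset M \<le> N"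
        proof (rule ccontr)
          assume "\<not> sum_mset M \<le> N"
          then have "Suc (greedy_coins A N) \<le> n" using reach_bound[OF assms M(2)] by simp
          then show False using hN by simp
        qed
        then show "x \<le> enat N" using M by simp
      qed
      show "enat N \<le> Sup ?S" using low[OF bel] by (rule Sup_upper)
    qed
    then show ?thesis using G unfolding agg_total_def by simp
  next
    case False
    have G: "greedy_G n A = \<infinity>" using False unfolding greedy_G_def by simp
    have all: "enat k \<le> Sup ?S" for k
      using low[of k] False by (intro Sup_upper) (auto simp: not_le)
    have "Sup ?S = \<infinity>"
    proof (cases "Sup ?S")
      case (enat m)
      then have "enat (Suc m) \<le> enat m" using all[of "Suc m"] by simp
      then show ?thesis by simp
    qed simp
    then show ?thesis using G unfolding agg_total_def by simp
  qed
qed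

end
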